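(* Let $X$ be a completely subscalable nonnegative random variable and let $g : [0,\infty) \to [0,\infty)$ be an increasing (non-decreasing) convex function with $g(0) = 0$. Then the random variable $Y := g(X)$ is completely subscalable.
   Context: A nonnegative random variable $X$ with survival function $\overline{F}(x)=\mathbb{P}(X>x)$ is called completely subscalable if $\theta \, \overline{F}(x) \leq \overline{F}(x/\theta)$ for all $x \geq 0$ and all $\theta \in (0,1)$. *)

theory Defs
  imports "HOL-Probability.Probability"
begin

definition completely_subscalable :: "'a measure \<Rightarrow> ('a \<Rightarrow> real) \<Rightarrow> bool" where
  "completely_subscalable M X \<longleftrightarrow>
     X \<in> borel_measurable M \<and> (\<forall>\<omega>\<in>space M. 0 \<le> X \<omega>) \<and>
     (\<forall>x::real. \<forall>\<theta>::real. 0 \<le> x \<and> 0 < \<theta> \<and> \<theta> < 1 \<longrightarrow>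
        \<theta> * measure M {\<omega>\<in>space M. X \<omega> > x} \<le> measure M {\<omega>\<in>space M. X \<omega> > x / \<theta>})"

end

theory Submission
  imports Defs
begin

theorem lemma8:
  fixes M :: "'a measure" and X :: "'a \<Rightarrow> real" and g :: "real \<Rightarrow> real"
  assumes "prob_space M"
    and "completely_subscalable M X"
    and "\<forall>x\<ge>0. 0 \<le> g x"
    and "mono_on {0..} g"
    and "convex_on {0..} g"
    and "g 0 = 0"
  shows "completely_subscalable M (\<lambda>\<omega>. g (X \<omega>))"
proof -
  interpret P: prob_space M by fact
  have Xm: "X \<in> borel_measurable M" and X0: "\<And>w. w \<in> space M \<Longrightarrow> 0 \<le> X w"
    and CS: "\<And>x t. 0 \<le> x \<Longrightarrow> 0 < t \<Longrightarrow> t < 1 \<Longrightarrow>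
        t * measure M {\<omega>\<in>space M. X \<omega> > x} \<le> measure M {\<omega>\<in>space M. X \<omega> > x / t}"
    using assms(2) unfolding completely_subscalable_def by auto
  have gmono: "\<And>a b. 0 \<le> a \<Longrightarrow> a \<le> b \<Longrightarrow> g a \<le> g b"
    using assms(4) by (auto simp: mono_on_def)
  define g' where "g' x = g (max 0 x)" for x
  have "mono g'" unfolding mono_def g'_def by (auto intro!: gmono)
  hence "g' \<in> borel_measurable borel" by (rule borel_measurable_mono)
  hence "(\<lambda>w. g' (X w)) \<in> borel_measurable M" using Xm by measurable
  moreover have "\<And>w. w \<in> space M \<Longrightarrow> g' (X w) = g (X w)"
    using X0 by (simp add: g'_def max_def)
  ultimately have gXm: "(\<lambda>w. g (X w)) \<in> borel_measurable M"
    using measurable_cong by (metis (no_types, lifting))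
  have conv: "g (t * x) \<le> t * g x" if "0 \<le> t" "t \<le> 1" "0 \<le> x" for t x
    using convex_onD[OF assms(5), of t 0 x] that assms(6) by simp
  have cont: "continuous_on {0<..} g"
    by (rule convex_on_continuous) (auto intro: convex_on_subset[OF assms(5)])
  have main: "t * measure M {\<omega>\<in>space M. g (X \<omega>) > y} \<le> measure M {\<omega>\<in>space M. g (X \<omega>) > y / t}"
    if y: "0 \<le> y" and t: "0 < t" "t < 1" for y t
  proof (cases "\<exists>x\<ge>0. g x > y")
    case False
    hence e: "{\<omega>\<in>space M. g (X \<omega>) > y} = {}" using X0 by force
    show ?thesis unfolding e by simp
  next
    case True
    define S where "S = {x. 0 \<le> x \<and> g x > y}"
    define x0 where "x0 = Inf S"
    have Sne: "S \<noteq> {}" using True S_def by auto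
    have bdd: "bdd_below S" unfolding S_def by (rule bdd_belowI[of _ 0]) auto
    have x0ge: "0 \<le> x0" unfolding x0_def using Sne
      by (rule cInf_greatest) (auto simp: S_def)
    have char: "g x > y \<longleftrightarrow> x > x0" if "0 \<le> x" for x
    proof
      assume gx: "g x > y"
      hence xS: "x \<in> S" using that S_def by auto
      hence "x0 \<le> x" unfolding x0_def using bdd by (rule cInf_lower)
      moreover have "x \<noteq> x0"
      proof
        assume xx: "x = x0"
        have "x0 \<noteq> 0" using gx xx assms(6) y by auto
        hence pos: "x0 > 0" using x0ge by simp
        have "isCont g x0" using cont pos
          by (simp add: continuous_on_eq_continuous_at)
        hence "\<forall>\<^sub>F z in at x0. g z > y" using gx xx
          by (simp add: isCont_def order_tendstoD(1))
        hence "\<forall>\<^sub>F z in at_left x0. g z > y"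
          by (simp add: eventually_at_split)
        moreover have "\<forall>\<^sub>F z in at_left x0. z > 0"
          using order_tendstoD(1)[OF tendsto_ident_at pos, of "{..<x0}"] by simp
        moreover have "\<forall>\<^sub>F z in at_left x0. z < x0"
          by (simp add: eventually_at_filter)
        ultimately have "\<forall>\<^sub>F z in at_left x0. g z > y \<and> z > 0 \<and> z < x0"
          by (simp add: eventually_conj_iff)
        hence "\<exists>z. g z > y \<and> z > 0 \<and> z < x0"
          using eventually_happens trivial_limit_at_left_real by blast
        then obtain z where "g z > y" "z > 0" "z < x0" by blast
        hence "z \<in> S" by (simp add: S_def)
        hence "x0 \<le> z" unfolding x0_def using bdd by (rule cInf_lower)
        thus False using \<open>z < x0\<close> by simp
      qed
      ultimately show "x > x0" by simp
    next
      assume "x > x0"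
      then obtain s where "s \<in> S" "s < x" unfolding x0_def using Sne
        by (meson cInf_lessD)
      thus "g x > y" using gmono[of s x] S_def by force
    qed
    have eq: "{\<omega>\<in>space M. g (X \<omega>) > y} = {\<omega>\<in>space M. X \<omega> > x0}"
      using char X0 by blast
    have sub: "{\<omega>\<in>space M. X \<omega> > x0 / t} \<subseteq> {\<omega>\<in>space M. g (X \<omega>) > y / t}"
    proof safe
      fix w assume w: "w \<in> space M" "x0 / t < X w"
      have "t * X w > x0" using w t by (simp add: field_simps)
      hence "g (t * X w) > y" using char[of "t * X w"] X0[OF w(1)] t by simp
      hence "t * g (X w) > y" using conv[of t "X w"] X0[OF w(1)] t by simp
      thus "y / t < g (X w)" using t by (simp add: field_simps)
    qed
    have "t * measure M {\<omega>\<in>space M. g (X \<omega>) > y} \<le> measure M {\<omega>\<in>space M. X \<omega> > x0 / t}"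
      using eq CS[OF x0ge t] by simp
    also have "\<dots> \<le> measure M {\<omega>\<in>space M. g (X \<omega>) > y / t}"
      by (rule P.finite_measure_mono[OF sub]) (use gXm in measurable)
    finally show ?thesis .
  qed
  show ?thesis unfolding completely_subscalable_def
    using gXm X0 assms(3) main by auto
qed

end
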